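(* Let $N \ge 1$ and $p \ge 1$. Then there exist $\delta_0>0$ and a closed half-space $H\subset \mathbb{R}^N$ with $0\in H$ such that for every $0<\delta<\delta_0$ there exists a measurable function $u:\mathbb{R}^N\to\mathbb{R}$ with $I_\delta(u^H)>I_\delta(u)$.
   Context: For $\delta>0$, $p\ge 1$ and measurable $u:\mathbb{R}^N\to\mathbb{R}$, define $$I_\delta(u):=\iint_{\{(x,y)\in\mathbb{R}^N\times\mathbb{R}^N:\ |u(y)-u(x)|>\delta\}}\frac{\delta^p}{|x-y|^{N+p}}\,dx\,dy \in[0,+\infty].$$ For a closed half-space $H\subset\mathbb{R}^N$, let $\sigma_H:\mathbb{R}^N\to\mathbb{R}^N$ denote the reflection across the hyperplane $\partial H$ (an isometry with $\sigma_H^2=\mathrm{Id}$ and $|x-y|<|x-\sigma_H(y)|$ for $x,y$ in the interior of $H$). The polarization (two-point rearrangement) of $u$ with respect to $H$ is $$u^H(x):=\begin{cases}\max\{u(x),u(\sigma_H(x))\}, & x\in H,\\ \min\{u(x),u(\sigma_H(x))\}, & x\in \mathbb{R}^N\setminus H.\end{cases}$$ *)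

theory Defs
  imports "HOL-Analysis.Analysis"
begin

definition halfspace :: "'a::euclidean_space \<Rightarrow> real \<Rightarrow> 'a set" where
  "halfspace a b = {x. inner a x \<le> b}"

definition refl_hp :: "'a::euclidean_space \<Rightarrow> real \<Rightarrow> 'a \<Rightarrow> 'a" where
  "refl_hp a b x = x - (2 * (inner a x - b) / (norm a)^2) *\<^sub>R a"

definition polarization :: "'a::euclidean_space \<Rightarrow> real \<Rightarrow> ('a \<Rightarrow> real) \<Rightarrow> 'a \<Rightarrow> real" where
  "polarization a b u x =
     (if x \<in> halfspace a b then max (u x) (u (refl_hp a b x))
      else min (u x) (u (refl_hp a b x)))"

definition I_delta :: "real \<Rightarrow> real \<Rightarrow> ('a::euclidean_space \<Rightarrow> real) \<Rightarrow> ennreal" where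
  "I_delta p \<delta> u =
     (\<integral>\<^sup>+ z. indicator {(x, y). \<bar>u y - u x\<bar> > \<delta>} z *
              ennreal (\<delta> powr p / (dist (fst z) (snd z)) powr (real DIM('a) + p))
        \<partial>(lebesgue \<Otimes>\<^sub>M lebesgue))"

end

theory Submission
  imports Defs
begin

lemma sf_leb: "sigma_finite_measure (lebesgue :: 'a::euclidean_space measure)"
proof -
  obtain A :: "'a set set" where "countable A" "A \<subseteq> sets lborel" "\<Union>A = space lborel" "\<forall>a\<in>A. emeasure lborel a \<noteq> \<infinity>"
    using sigma_finite_lborel unfolding sigma_finite_measure_def by blast
  then show ?thesis unfolding sigma_finite_measure_def
    by (intro exI[of _ A]) auto
qed

lemma K_meas: "(\<lambda>z. ennreal (d / dist (fst z) (snd z) powr q)) \<in> borel_measurable ((lebesgue::'a::euclidean_space measure) \<Otimes>\<^sub>M lebesgue)"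
proof -
  have "fst \<in> ((lebesgue::'a::euclidean_space measure) \<Otimes>\<^sub>M lebesgue) \<rightarrow>\<^sub>M borel"
    by (rule measurable_compose[OF measurable_fst]) (rule measurable_completion, simp)
  moreover have "snd \<in> ((lebesgue::'a::euclidean_space measure) \<Otimes>\<^sub>M lebesgue) \<rightarrow>\<^sub>M borel"
    by (rule measurable_compose[OF measurable_snd]) (rule measurable_completion, simp)
  ultimately show ?thesis by measurable
qed

lemma pair_emeasure:
  fixes S T :: "'a::euclidean_space set"
  assumes "S \<in> sets lebesgue" "T \<in> sets lebesgue"
  shows "emeasure (lebesgue \<Otimes>\<^sub>M lebesgue) (S \<times> T) = emeasure lebesgue S * emeasure lebesgue T"
  using sigma_finite_measure.emeasure_pair_measure_Times[OF sf_leb assms] .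

lemma rect_le:
  fixes S T :: "'a::euclidean_space set"
  assumes "S \<in> sets lebesgue" "T \<in> sets lebesgue" "0 < m" "q \<ge> 0" "d \<ge> 0"
    and "\<And>x y. x \<in> S \<Longrightarrow> y \<in> T \<Longrightarrow> m \<le> dist x y"
  shows "(\<integral>\<^sup>+ z. indicator (S \<times> T) z * ennreal (d / dist (fst z) (snd z) powr q) \<partial>(lebesgue \<Otimes>\<^sub>M lebesgue))
     \<le> ennreal (d / m powr q) * (emeasure lebesgue S * emeasure lebesgue T)"
proof -
  have "(\<integral>\<^sup>+ z. indicator (S \<times> T) z * ennreal (d / dist (fst z) (snd z) powr q) \<partial>(lebesgue \<Otimes>\<^sub>M lebesgue))
     \<le> (\<integral>\<^sup>+ z. ennreal (d / m powr q) * indicator (S \<times> T) z \<partial>(lebesgue \<Otimes>\<^sub>M lebesgue))"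
  proof (rule nn_integral_mono)
    fix z :: "'a \<times> 'a"
    show "indicator (S \<times> T) z * ennreal (d / dist (fst z) (snd z) powr q) \<le> ennreal (d / m powr q) * indicator (S \<times> T) z"
    proof (cases "z \<in> S \<times> T")
      case True
      then obtain x y where z: "z = (x,y)" "x \<in> S" "y \<in> T" by auto
      have "m \<le> dist x y" using assms(6) z by auto
      then have "m powr q \<le> dist x y powr q" using assms by (intro powr_mono2) auto
      moreover have "0 < m powr q" using assms by simp
      moreover have "0 < dist x y powr q" using assms \<open>m \<le> dist x y\<close>
        by (metis dist_pos_lt dist_self less_le_trans not_less powr_gt_zero)
      ultimately have "d / dist x y powr q \<le> d / m powr q" using assms
        by (intro divide_left_mono) (auto intro: mult_pos_pos)
      then show ?thesis using True z by (simp add: ennreal_leI)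
    qed simp
  qed
  also have "\<dots> = ennreal (d / m powr q) * emeasure (lebesgue \<Otimes>\<^sub>M lebesgue) (S \<times> T)"
    using assms by (intro nn_integral_cmult_indicator) auto
  finally show ?thesis using pair_emeasure[OF assms(1,2)] by simp
qed

lemma rect_ge:
  fixes S T :: "'a::euclidean_space set"
  assumes "S \<in> sets lebesgue" "T \<in> sets lebesgue" "q \<ge> 0" "d \<ge> 0"
    and "\<And>x y. x \<in> S \<Longrightarrow> y \<in> T \<Longrightarrow> 0 < dist x y \<and> dist x y \<le> M"
  shows "ennreal (d / M powr q) * (emeasure lebesgue S * emeasure lebesgue T) \<le>
     (\<integral>\<^sup>+ z. indicator (S \<times> T) z * ennreal (d / dist (fst z) (snd z) powr q) \<partial>(lebesgue \<Otimes>\<^sub>M lebesgue))"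
proof -
  have "ennreal (d / M powr q) * (emeasure lebesgue S * emeasure lebesgue T) = 
     ennreal (d / M powr q) * emeasure (lebesgue \<Otimes>\<^sub>M lebesgue) (S \<times> T)"
    using pair_emeasure[OF assms(1,2)] by simp
  also have "\<dots> = (\<integral>\<^sup>+ z. ennreal (d / M powr q) * indicator (S \<times> T) z \<partial>(lebesgue \<Otimes>\<^sub>M lebesgue))"
    using assms by (intro nn_integral_cmult_indicator[symmetric]) auto
  also have "\<dots> \<le> (\<integral>\<^sup>+ z. indicator (S \<times> T) z * ennreal (d / dist (fst z) (snd z) powr q) \<partial>(lebesgue \<Otimes>\<^sub>M lebesgue))"
  proof (rule nn_integral_mono)
    fix z :: "'a \<times> 'a"
    show "ennreal (d / M powr q) * indicator (S \<times> T) z \<le> indicator (S \<times> T) z * ennreal (d / dist (fst z) (snd z) powr q)"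
    proof (cases "z \<in> S \<times> T")
      case True
      then obtain x y where z: "z = (x,y)" "x \<in> S" "y \<in> T" by auto
      have "0 < dist x y" "dist x y \<le> M" using assms(5) z by auto
      then have "dist x y powr q \<le> M powr q" using assms by (intro powr_mono2) auto
      moreover have "0 < dist x y powr q" using \<open>0 < dist x y\<close> by simp
      moreover have "0 < M powr q" using \<open>0 < dist x y\<close> \<open>dist x y \<le> M\<close> by (subst powr_gt_zero) linarith
      ultimately have "d / M powr q \<le> d / dist x y powr q" using assms
        by (intro divide_left_mono) (auto intro: mult_pos_pos)
      then show ?thesis using True z by (simp add: ennreal_leI)
    qed simp
  qed
  finally show ?thesis .
qed

definition eB :: "'a::euclidean_space" where "eB = (SOME e. e \<in> Basis)"
definition Bk :: "real \<Rightarrow> 'a::euclidean_space set" where "Bk k = ball (k *\<^sub>R eB) (1/4)"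

lemma eB_Basis: "(eB::'a::euclidean_space) \<in> Basis"
  unfolding eB_def by (rule someI_ex) (use nonempty_Basis in blast)

lemma eB_inner[simp]: "(eB::'a::euclidean_space) \<bullet> eB = 1"
  using inner_Basis[OF eB_Basis eB_Basis] by simp
lemma eB_norm[simp]: "norm (eB::'a::euclidean_space) = 1"
  using norm_Basis[OF eB_Basis] by simp

lemma inner_le_norm_eB: "\<bar>(eB::'a::euclidean_space) \<bullet> w\<bar> \<le> norm w"
  using Basis_le_norm[OF eB_Basis, of w] by (simp add: inner_commute)

lemma Bk_coord: "x \<in> Bk k \<Longrightarrow> k - 1/4 < (eB::'a::euclidean_space) \<bullet> x \<and> eB \<bullet> x < k + 1/4"
proof -
  assume "x \<in> Bk k"
  then have "norm (x - k *\<^sub>R eB) < 1/4" by (simp add: Bk_def dist_norm norm_minus_commute)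
  moreover have "eB \<bullet> (x - k *\<^sub>R eB) = eB \<bullet> x - k" by (simp add: inner_diff_right)
  ultimately show ?thesis using inner_le_norm_eB[of "x - k *\<^sub>R eB"] by auto
qed

lemma Bk_dist_lower: "x \<in> Bk k \<Longrightarrow> y \<in> Bk k' \<Longrightarrow> \<bar>k - k'\<bar> - 1/2 \<le> dist x (y::'a::euclidean_space)"
proof -
  assume "x \<in> Bk k" "y \<in> Bk k'"
  then have "\<bar>k - k'\<bar> - 1/2 \<le> \<bar>eB \<bullet> x - eB \<bullet> y\<bar>" using Bk_coord[of x k] Bk_coord[of y k'] by auto
  also have "\<dots> = \<bar>eB \<bullet> (x - y)\<bar>" by (simp add: inner_diff_right)
  also have "\<dots> \<le> dist x y" using inner_le_norm_eB by (simp add: dist_norm)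
  finally show ?thesis .
qed

lemma Bk_dist_upper: "x \<in> Bk k \<Longrightarrow> y \<in> Bk k' \<Longrightarrow> dist x (y::'a::euclidean_space) \<le> \<bar>k - k'\<bar> + 1/2"
proof -
  assume "x \<in> Bk k" "y \<in> Bk k'"
  then have a: "dist x (k *\<^sub>R eB) < 1/4" "dist (k' *\<^sub>R eB) y < 1/4" by (auto simp: Bk_def dist_commute)
  have "dist x y \<le> dist x (k *\<^sub>R eB) + dist (k *\<^sub>R eB) y"
    by (rule dist_triangle)
  moreover have "dist (k *\<^sub>R eB) y \<le> dist (k *\<^sub>R eB) (k' *\<^sub>R eB) + dist (k' *\<^sub>R eB) y"
    using dist_triangle[of "k *\<^sub>R eB" y "k' *\<^sub>R eB"] by simp
  moreover have "dist (k *\<^sub>R eB) (k' *\<^sub>R (eB::'a)) = \<bar>k - k'\<bar>"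
    by (simp add: dist_norm flip: scaleR_diff_left)
  ultimately have "dist x y \<le> dist x (k *\<^sub>R eB) + (\<bar>k - k'\<bar> + dist (k' *\<^sub>R eB) y)"
    by (metis add_left_mono order_trans)
  then show ?thesis using a by linarith
qed

lemma refl_eB: "refl_hp eB 0 x = x - (2 * (eB \<bullet> x)) *\<^sub>R (eB::'a::euclidean_space)"
  by (simp add: refl_hp_def)

lemma refl_norm: "norm (w - (2 * (eB \<bullet> w)) *\<^sub>R (eB::'a::euclidean_space)) = norm w"
proof -
  have "(norm (w - (2 * (eB \<bullet> w)) *\<^sub>R (eB::'a::euclidean_space)))^2 = (norm w)^2"
    by (simp add: power2_norm_eq_inner inner_diff_left inner_diff_right algebra_simps inner_commute)
  then show ?thesis by (simp add: power2_eq_iff_nonneg)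
qed

lemma refl_Bk[simp]: "refl_hp eB 0 x \<in> Bk k \<longleftrightarrow> x \<in> Bk (-k)"
proof -
  have "k *\<^sub>R eB - refl_hp eB 0 x = (-k *\<^sub>R eB - x) - (2 * (eB \<bullet> (-k *\<^sub>R eB - x))) *\<^sub>R (eB::'a)"
    by (simp add: refl_eB inner_diff_right algebra_simps flip: scaleR_add_left)
  then have "dist (k *\<^sub>R eB) (refl_hp eB 0 x) = dist (-k *\<^sub>R eB) x"
    by (simp add: dist_norm refl_norm)
  then show ?thesis by (simp add: Bk_def)
qed

lemma halfspace_eB: "x \<in> halfspace eB 0 \<longleftrightarrow> eB \<bullet> (x::'a::euclidean_space) \<le> 0"
  by (simp add: halfspace_def)

definition vfun :: "'a::euclidean_space \<Rightarrow> real" where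
  "vfun x = (if x \<in> Bk (-3) then 3/2 else if x \<in> Bk 3 then 17/10 else if x \<in> Bk (-1) then 3/5
             else if x \<in> Bk 1 then 0 else 1)"
definition wfun :: "'a::euclidean_space \<Rightarrow> real" where
  "wfun x = (if x \<in> Bk (-3) then 17/10 else if x \<in> Bk 3 then 3/2 else if x \<in> Bk (-1) then 3/5
             else if x \<in> Bk 1 then 0 else 1)"


lemma Bk_disj: "x \<in> Bk k \<Longrightarrow> 1/2 \<le> \<bar>k - k'\<bar> \<Longrightarrow> x \<notin> Bk k'"
  using Bk_coord[of x k] Bk_coord[of x k'] by (auto simp: abs_if split: if_split_asm)

lemma Bk_neg: "x \<in> Bk k \<Longrightarrow> k \<le> -1/2 \<Longrightarrow> eB \<bullet> x < 0"
  using Bk_coord[of x k] by auto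
lemma Bk_pos: "x \<in> Bk k \<Longrightarrow> k \<ge> 1/2 \<Longrightarrow> eB \<bullet> x > 0"
  using Bk_coord[of x k] by auto

lemma polar_v: "polarization eB 0 (\<lambda>x. d * vfun x) x = d * wfun (x::'a::euclidean_space)" if d: "d > 0"
proof -
  consider "x \<in> Bk (-3)" | "x \<in> Bk 3" | "x \<in> Bk (-1)" | "x \<in> Bk 1"
    | "x \<notin> Bk (-3)" "x \<notin> Bk 3" "x \<notin> Bk (-1)" "x \<notin> Bk 1" by blast
  then show ?thesis
  proof cases
    case 1
    then have "x \<notin> Bk 3" "x \<notin> Bk (-1)" "x \<notin> Bk 1" "eB \<bullet> x < 0"
      by (auto dest: Bk_disj[where k'=3] Bk_disj[where k'="-1"] Bk_disj[where k'=1] Bk_neg)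
    with 1 d show ?thesis unfolding polarization_def halfspace_eB vfun_def wfun_def by simp
  next
    case 2
    then have "x \<notin> Bk (-3)" "x \<notin> Bk (-1)" "x \<notin> Bk 1" "eB \<bullet> x > 0"
      by (auto dest: Bk_disj[where k'="-3"] Bk_disj[where k'="-1"] Bk_disj[where k'=1] Bk_pos)
    with 2 d show ?thesis unfolding polarization_def halfspace_eB vfun_def wfun_def by simp
  next
    case 3
    then have "x \<notin> Bk 3" "x \<notin> Bk (-3)" "x \<notin> Bk 1" "eB \<bullet> x < 0"
      by (auto dest: Bk_disj[where k'=3] Bk_disj[where k'="-3"] Bk_disj[where k'=1] Bk_neg)
    with 3 d show ?thesis unfolding polarization_def halfspace_eB vfun_def wfun_def by simp
  next
    case 4
    then have "x \<notin> Bk 3" "x \<notin> Bk (-1)" "x \<notin> Bk (-3)" "eB \<bullet> x > 0"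
      by (auto dest: Bk_disj[where k'=3] Bk_disj[where k'="-1"] Bk_disj[where k'="-3"] Bk_pos)
    with 4 d show ?thesis unfolding polarization_def halfspace_eB vfun_def wfun_def by simp
  next
    case 5
    with d show ?thesis unfolding polarization_def halfspace_eB vfun_def wfun_def by simp
  qed
qed


lemma regions:
  fixes x :: "'a::euclidean_space"
  shows "(x \<in> Bk (-3) \<and> x \<notin> Bk 3 \<and> x \<notin> Bk (-1) \<and> x \<notin> Bk 1) \<or>
         (x \<notin> Bk (-3) \<and> x \<in> Bk 3 \<and> x \<notin> Bk (-1) \<and> x \<notin> Bk 1) \<or>
         (x \<notin> Bk (-3) \<and> x \<notin> Bk 3 \<and> x \<in> Bk (-1) \<and> x \<notin> Bk 1) \<or>
         (x \<notin> Bk (-3) \<and> x \<notin> Bk 3 \<and> x \<notin> Bk (-1) \<and> x \<in> Bk 1) \<or>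
         (x \<notin> Bk (-3) \<and> x \<notin> Bk 3 \<and> x \<notin> Bk (-1) \<and> x \<notin> Bk 1)"
  using Bk_coord[of x "-3"] Bk_coord[of x "3"] Bk_coord[of x "-1"] Bk_coord[of x "1"]
  by (cases "x \<in> Bk (-3)"; cases "x \<in> Bk 3"; cases "x \<in> Bk (-1)"; cases "x \<in> Bk 1") auto

lemma abs_scale: "(d::real) > 0 \<Longrightarrow> d < \<bar>d * a - d * b\<bar> \<longleftrightarrow> 1 < \<bar>a - b\<bar>"
proof -
  assume "d > 0"
  have "\<bar>d * a - d * b\<bar> = d * \<bar>a - b\<bar>" using \<open>d > 0\<close>
    by (simp add: abs_mult flip: right_diff_distrib)
  then show ?thesis using \<open>d > 0\<close> by simp
qed

lemma ind_v:
  fixes d :: real and z :: "'a::euclidean_space \<times> 'a"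
  assumes "d > 0"
  shows "(indicator {(x,y). d < \<bar>d * vfun y - d * vfun x\<bar>} z :: ennreal) =
    indicator (Bk (-3) \<times> Bk 1) z + indicator (Bk 1 \<times> Bk (-3)) z + indicator (Bk 3 \<times> Bk 1) z
    + indicator (Bk 1 \<times> Bk 3) z + (indicator (Bk 3 \<times> Bk (-1)) z + indicator (Bk (-1) \<times> (Bk 3 :: 'a::euclidean_space set)) z)"
proof -
  obtain x y :: 'a where z: "z = (x,y)" by force
  show ?thesis
    using regions[of x] regions[of y] unfolding z
    by (auto simp: indicator_def abs_scale[OF assms] vfun_def)
qed

lemma ind_w:
  fixes d :: real and z :: "'a::euclidean_space \<times> 'a"
  assumes "d > 0"
  shows "(indicator {(x,y). d < \<bar>d * wfun y - d * wfun x\<bar>} z :: ennreal) =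
    indicator (Bk (-3) \<times> Bk 1) z + indicator (Bk 1 \<times> Bk (-3)) z + indicator (Bk 3 \<times> Bk 1) z
    + indicator (Bk 1 \<times> Bk 3) z + (indicator (Bk (-3) \<times> Bk (-1)) z + indicator (Bk (-1) \<times> (Bk (-3) :: 'a::euclidean_space set)) z)"
proof -
  obtain x y :: 'a where z: "z = (x,y)" by force
  show ?thesis
    using regions[of x] regions[of y] unfolding z
    by (auto simp: indicator_def abs_scale[OF assms] wfun_def)
qed


lemma Bk_sets[measurable]: "Bk k \<in> sets lebesgue"
  by (simp add: Bk_def)

lemma Bk_emeasure: "emeasure lebesgue (Bk k :: 'a::euclidean_space set) = ennreal (unit_ball_vol (DIM('a)) * (1/4) ^ DIM('a))"
  by (simp add: Bk_def emeasure_ball)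

lemma vfun_meas: "vfun \<in> borel_measurable lebesgue"
  unfolding vfun_def by measurable

lemma rect_meas:
  assumes "S \<in> sets lebesgue" "T \<in> sets lebesgue"
  shows "(\<lambda>z. indicator (S \<times> T) z * ennreal (d / dist (fst z) (snd z) powr q)) \<in> borel_measurable ((lebesgue::'a::euclidean_space measure) \<Otimes>\<^sub>M lebesgue)"
proof -
  have "S \<times> T \<in> sets ((lebesgue::'a::euclidean_space measure) \<Otimes>\<^sub>M lebesgue)" using assms by (rule pair_measureI)
  then show ?thesis using K_meas[of d q] by measurable
qed

theorem theorem1p1:
  fixes p :: real
  assumes "p \<ge> 1"
  shows "\<exists>\<delta>0 > 0. \<exists>(a::'a::euclidean_space) b. a \<noteq> 0 \<and> 0 \<in> halfspace a b \<and>
           (\<forall>\<delta>. 0 < \<delta> \<and> \<delta> < \<delta>0 \<longrightarrow>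
              (\<exists>u :: 'a \<Rightarrow> real. u \<in> borel_measurable lebesgue \<and>
                  I_delta p \<delta> (polarization a b u) > I_delta p \<delta> u))"
proof -
  have main: "\<exists>u :: 'a \<Rightarrow> real. u \<in> borel_measurable lebesgue \<and>
                  I_delta p \<delta> (polarization eB 0 u) > I_delta p \<delta> u" if "0 < \<delta>" for \<delta> :: real
  proof -
    define q where "q = real DIM('a) + p"
    have q: "q > 0" using assms by (simp add: q_def add_pos_nonneg)
    define dd where "dd = \<delta> powr p"
    have dd: "dd > 0" using that by (simp add: dd_def)
    define K where "K = (\<lambda>z::'a \<times> 'a. ennreal (dd / dist (fst z) (snd z) powr q))"
    define M where "M = (lebesgue::'a measure) \<Otimes>\<^sub>M (lebesgue::'a measure)"
    define X where "X = (Bk (-3) :: 'a set)"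
    define X' where "X' = (Bk 3 :: 'a set)"
    define Y where "Y = (Bk (-1) :: 'a set)"
    define Y' where "Y' = (Bk 1 :: 'a set)"
    define m0 where "m0 = unit_ball_vol (DIM('a)) * (1/4::real) ^ DIM('a)"
    have m0: "m0 > 0" unfolding m0_def by (intro mult_pos_pos unit_ball_vol_pos) auto
    have mu: "emeasure lebesgue (Bk k :: 'a set) = ennreal m0" for k
      unfolding m0_def by (rule Bk_emeasure)
    have sets: "X \<in> sets lebesgue" "X' \<in> sets lebesgue" "Y \<in> sets lebesgue" "Y' \<in> sets lebesgue"
      unfolding X_def X'_def Y_def Y'_def by simp_all
    have meas: "(\<lambda>z. indicator (S \<times> T) z * K z) \<in> borel_measurable M"
      if "S \<in> sets lebesgue" "T \<in> sets lebesgue" for S T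
      unfolding K_def M_def using rect_meas[OF that] .
    have emul: "ennreal (a * (b * b)) = ennreal a * (ennreal b * ennreal b)" if "a \<ge> 0" "b \<ge> 0" for a b :: real
      using that by (simp add: ennreal_mult)
    have ub: "integral\<^sup>N M (\<lambda>z. indicator (Bk k \<times> Bk k') z * K z) \<le> ennreal (dd / m powr q * (m0 * m0))"
      if "0 < m" "m \<le> \<bar>k - k'\<bar> - 1/2" for k k' m
    proof -
      have "integral\<^sup>N M (\<lambda>z. indicator (Bk k \<times> Bk k') z * K z) \<le> ennreal (dd / m powr q) * (emeasure lebesgue (Bk k :: 'a set) * emeasure lebesgue (Bk k' :: 'a set))"
        unfolding M_def K_def
        using that q dd by (intro rect_le) (auto dest!: Bk_dist_lower[of _ k _ k'])
      also have "\<dots> = ennreal (dd / m powr q * (m0 * m0))"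
        using dd m0 \<open>0 < m\<close> by (subst emul) (auto simp: mu)
      finally show ?thesis .
    qed
    have lb: "ennreal (dd / m powr q * (m0 * m0)) \<le> integral\<^sup>N M (\<lambda>z. indicator (Bk k \<times> Bk k') z * K z)"
      if "\<bar>k - k'\<bar> + 1/2 \<le> m" "1 \<le> \<bar>k - k'\<bar>" for k k' m
    proof -
      have "0 < m" using that by simp
      have "ennreal (dd / m powr q * (m0 * m0)) = ennreal (dd / m powr q) * (emeasure lebesgue (Bk k :: 'a set) * emeasure lebesgue (Bk k' :: 'a set))"
        using dd m0 \<open>0 < m\<close> by (subst emul) (auto simp: mu)
      also have "\<dots> \<le> integral\<^sup>N M (\<lambda>z. indicator (Bk k \<times> Bk k') z * K z)"
        unfolding M_def K_def
      proof (intro rect_ge)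
        fix x y :: 'a assume "x \<in> Bk k" "y \<in> Bk k'"
        with Bk_dist_lower[of x k y k'] Bk_dist_upper[of x k y k'] that
        show "0 < dist x y \<and> dist x y \<le> m" by linarith
      qed (use q dd in auto)
      finally show ?thesis .
    qed
    define P where "P = (\<lambda>z. indicator (X \<times> Y') z * K z + indicator (Y' \<times> X) z * K z
        + indicator (X' \<times> Y') z * K z + indicator (Y' \<times> X') z * K z)"
    have Iu: "I_delta p \<delta> (\<lambda>x::'a. \<delta> * vfun x) = integral\<^sup>N M P
       + (integral\<^sup>N M (\<lambda>z. indicator (X' \<times> Y) z * K z) + integral\<^sup>N M (\<lambda>z. indicator (Y \<times> X') z * K z))"
    proof -
      have "I_delta p \<delta> (\<lambda>x::'a. \<delta> * vfun x) = integral\<^sup>N M (\<lambda>z. P z + (indicator (X' \<times> Y) z * K z + indicator (Y \<times> X') z * K z))"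
        unfolding I_delta_def M_def[symmetric] ind_v[OF that] q_def[symmetric] dd_def[symmetric]
        unfolding K_def[symmetric] P_def X_def X'_def Y_def Y'_def
        by (simp add: distrib_right add.assoc K_def)
      also have "\<dots> = integral\<^sup>N M P + integral\<^sup>N M (\<lambda>z. indicator (X' \<times> Y) z * K z + indicator (Y \<times> X') z * K z)"
        unfolding P_def using sets by (intro nn_integral_add) (auto intro!: meas borel_measurable_add)
      also have "integral\<^sup>N M (\<lambda>z. indicator (X' \<times> Y) z * K z + indicator (Y \<times> X') z * K z)
         = integral\<^sup>N M (\<lambda>z. indicator (X' \<times> Y) z * K z) + integral\<^sup>N M (\<lambda>z. indicator (Y \<times> X') z * K z)"
        using sets by (intro nn_integral_add) (auto intro!: meas)
      finally show ?thesis .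
    qed
    have Iw: "I_delta p \<delta> (\<lambda>x::'a. \<delta> * wfun x) = integral\<^sup>N M P
       + (integral\<^sup>N M (\<lambda>z. indicator (X \<times> Y) z * K z) + integral\<^sup>N M (\<lambda>z. indicator (Y \<times> X) z * K z))"
    proof -
      have "I_delta p \<delta> (\<lambda>x::'a. \<delta> * wfun x) = integral\<^sup>N M (\<lambda>z. P z + (indicator (X \<times> Y) z * K z + indicator (Y \<times> X) z * K z))"
        unfolding I_delta_def M_def[symmetric] ind_w[OF that] q_def[symmetric] dd_def[symmetric]
        unfolding K_def[symmetric] P_def X_def X'_def Y_def Y'_def
        by (simp add: distrib_right add.assoc K_def)
      also have "\<dots> = integral\<^sup>N M P + integral\<^sup>N M (\<lambda>z. indicator (X \<times> Y) z * K z + indicator (Y \<times> X) z * K z)"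
        unfolding P_def using sets by (intro nn_integral_add) (auto intro!: meas borel_measurable_add)
      also have "integral\<^sup>N M (\<lambda>z. indicator (X \<times> Y) z * K z + indicator (Y \<times> X) z * K z)
         = integral\<^sup>N M (\<lambda>z. indicator (X \<times> Y) z * K z) + integral\<^sup>N M (\<lambda>z. indicator (Y \<times> X) z * K z)"
        using sets by (intro nn_integral_add) (auto intro!: meas)
      finally show ?thesis .
    qed
    define C0 where "C0 = ennreal (dd / 1 powr q * (m0 * m0))"
    have Pfin: "integral\<^sup>N M P \<noteq> \<infinity>"
    proof -
      have "integral\<^sup>N M P = integral\<^sup>N M (\<lambda>z. indicator (X \<times> Y') z * K z) + integral\<^sup>N M (\<lambda>z. indicator (Y' \<times> X) z * K z)
        + integral\<^sup>N M (\<lambda>z. indicator (X' \<times> Y') z * K z) + integral\<^sup>N M (\<lambda>z. indicator (Y' \<times> X') z * K z)"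
        unfolding P_def using sets
        by (simp add: nn_integral_add meas borel_measurable_add)
      also have "\<dots> \<le> C0 + C0 + C0 + C0"
        unfolding C0_def X_def X'_def Y_def Y'_def
        by (intro add_mono ub) auto
      also have "\<dots> < \<infinity>" unfolding C0_def by (simp add: less_top[symmetric])
      finally show ?thesis by simp
    qed
    define c1 where "c1 = dd / (7/2) powr q * (m0 * m0)"
    define c2 where "c2 = dd / (5/2) powr q * (m0 * m0)"
    have c12: "c1 < c2"
    proof -
      have "(5/2::real) powr q < (7/2) powr q" using q by (intro powr_less_mono2) auto
      then have "dd / (7/2) powr q < dd / (5/2) powr q"
        using dd by (intro divide_strict_left_mono) (auto intro: mult_pos_pos)
      moreover have "0 < m0 * m0" using m0 by simp
      ultimately show ?thesis unfolding c1_def c2_def by (rule mult_strict_right_mono)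
    qed
    have c1pos: "c1 \<ge> 0" unfolding c1_def using dd m0 by simp
    have Q: "integral\<^sup>N M (\<lambda>z. indicator (X' \<times> Y) z * K z) + integral\<^sup>N M (\<lambda>z. indicator (Y \<times> X') z * K z)
        \<le> ennreal c1 + ennreal c1"
      unfolding c1_def X'_def Y_def by (intro add_mono ub) auto
    have W: "ennreal c2 + ennreal c2 \<le> integral\<^sup>N M (\<lambda>z. indicator (X \<times> Y) z * K z) + integral\<^sup>N M (\<lambda>z. indicator (Y \<times> X) z * K z)"
      unfolding c2_def X_def Y_def by (intro add_mono lb) auto
    have "ennreal c1 + ennreal c1 < ennreal c2 + ennreal c2"
      using c12 c1pos by (simp add: ennreal_plus[symmetric] del: ennreal_plus) (intro ennreal_lessI; linarith)
    then have QW: "integral\<^sup>N M (\<lambda>z. indicator (X' \<times> Y) z * K z) + integral\<^sup>N M (\<lambda>z. indicator (Y \<times> X') z * K z)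
       < integral\<^sup>N M (\<lambda>z. indicator (X \<times> Y) z * K z) + integral\<^sup>N M (\<lambda>z. indicator (Y \<times> X) z * K z)"
      using Q W by (meson order.strict_trans1 order.strict_trans2)
    have "I_delta p \<delta> (\<lambda>x::'a. \<delta> * vfun x) < I_delta p \<delta> (\<lambda>x::'a. \<delta> * wfun x)"
      unfolding Iu Iw using Pfin QW by (simp add: ennreal_add_left_cancel_less)
    moreover have "polarization eB 0 (\<lambda>x::'a. \<delta> * vfun x) = (\<lambda>x::'a. \<delta> * wfun x)"
      using polar_v[OF that] by (rule ext)
    moreover have "(\<lambda>x::'a. \<delta> * vfun x) \<in> borel_measurable lebesgue"
      using vfun_meas by measurable
    ultimately show ?thesis by auto
  qed
  have "(eB::'a) \<noteq> 0" using eB_Basis nonzero_Basis by blast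
  moreover have "(0::'a) \<in> halfspace eB 0" by (simp add: halfspace_def)
  ultimately show ?thesis using main by (intro exI[of _ 1]) auto
qed

end
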